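(* In the abstract boundary problem setting described in the context, the operators $\gamma_0,\gamma_1:H_1\to K$ extend by continuity to bounded operators $\Gamma_0,\Gamma_1:\mathcal D(T^* )\to K'$ (with $\mathcal D(T^* )$ carrying the graph topology), and $$\langle T^*u,v\rangle-\langle u,T^*v\rangle=\langle \Gamma_1u,\Gamma_0v\rangle_{K',K}-\langle\Gamma_0u,\Gamma_1v\rangle_{K',K}$$ for every $u\in\mathcal D(T^* )$ and $v\in H_1$.
   Context: Inner products are linear in the first argument and conjugate-linear in the second. Let $H_0$ be a separable Hilbert space with inner product $\langle\cdot,\cdot\rangle$, let $T$ be a closed densely defined symmetric operator in $H_0$ with adjoint $T^*$, and equip $\mathcal D(T^* )$ with the graph norm. Let $H_1\subset H_0$ be a dense subspace which is a Hilbert space in its own right with bounded inclusion $H_1\to H_0$. Let $K^\partial$ be a separable Hilbert space with inner product $\langle\cdot,\cdot\rangle_\partial$ and $K\subset K^\partial$ a dense subspace which is a Hilbert space in its own right with bounded inclusion. Let $K'$ be the space of continuous anti-linear functionals on $K$ (a Hilbert space with the dual norm); $K^\partial$ is regarded as a dense subspace of $K'$ via $y\mapsto(x\mapsto\langle y,x\rangle_\partial)$, so $K\subset K^\partial\subset K'$. For $y\in K'$, $x\in K$ put $\langle y,x\rangle_{K',K}=y(x)$ and $\langle x,y\rangle_{K,K'}=\overline{y(x)}$; these agree with $\langle\cdot,\cdot\rangle_\partial$ when $y\in K^\partial$. Standing assumptions: $H_1\subset\mathcal D(T^* )$ and $H_1$ is dense in $\mathcal D(T^* )$ in the graph norm;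 $T^*|_{H_1}:H_1\to H_0$ is bounded; $\gamma_0,\gamma_1:H_1\to K$ are bounded linear operators such that $\gamma=\gamma_0\oplus\gamma_1:H_1\to K\oplus K$ is surjective; $\operatorname{Ker}\gamma$ is dense in $H_0$ and $\mathcal D(T)=\operatorname{Ker}\gamma$; and the Lagrange identity $\langle T^*u,v\rangle-\langle u,T^*v\rangle=\langle\gamma_1u,\gamma_0v\rangle_\partial-\langle\gamma_0u,\gamma_1v\rangle_\partial$ holds for all $u,v\in H_1$. *)

theory Defs
  imports "HOL-Analysis.Analysis"
begin

class cvec = real_vector +
  fixes cscale :: "complex \<Rightarrow> 'a \<Rightarrow> 'a" (infixr \<open>*\<^sub>C\<close> 75)
  assumes cscale_add_right: "a *\<^sub>C (x + y) = a *\<^sub>C x + a *\<^sub>C y"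
    and cscale_add_left: "(a + b) *\<^sub>C x = a *\<^sub>C x + b *\<^sub>C x"
    and cscale_cscale: "a *\<^sub>C (b *\<^sub>C x) = (a * b) *\<^sub>C x"
    and cscale_one: "1 *\<^sub>C x = x"
    and scaleR_cscale: "r *\<^sub>R x = complex_of_real r *\<^sub>C x"

class chilbert = cvec + banach +
  fixes cinner :: "'a \<Rightarrow> 'a \<Rightarrow> complex"
  assumes cinner_add_left: "cinner (x + y) z = cinner x z + cinner y z"
    and cinner_cscale_left: "cinner (a *\<^sub>C x) y = a * cinner x y"
    and cinner_commute: "cinner y x = cnj (cinner x y)"
    and cinner_self_norm: "cinner x x = complex_of_real ((norm x)\<^sup>2)"

definition csubspace :: "'a::cvec set \<Rightarrow> bool" where
  "csubspace S \<longleftrightarrow> 0 \<in> S \<and> (\<forall>x\<in>S. \<forall>y\<in>S. x + y \<in> S) \<and> (\<forall>c. \<forall>x\<in>S. c *\<^sub>C x \<in> S)"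

definition clinear_on :: "'a::cvec set \<Rightarrow> ('a \<Rightarrow> 'b::cvec) \<Rightarrow> bool" where
  "clinear_on S f \<longleftrightarrow> (\<forall>x\<in>S. \<forall>y\<in>S. f (x + y) = f x + f y) \<and> (\<forall>c. \<forall>x\<in>S. f (c *\<^sub>C x) = c *\<^sub>C f x)"

definition bounded_clinear_map :: "('a::{cvec,real_normed_vector} \<Rightarrow> 'b::{cvec,real_normed_vector}) \<Rightarrow> bool" where
  "bounded_clinear_map f \<longleftrightarrow> clinear_on UNIV f \<and> (\<exists>C. \<forall>x. norm (f x) \<le> C * norm x)"

definition antidual :: "('k::{cvec,real_normed_vector} \<Rightarrow> complex) set" where
  "antidual = {f. (\<forall>x y. f (x + y) = f x + f y) \<and> (\<forall>c x. f (c *\<^sub>C x) = cnj c * f x)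
                  \<and> (\<exists>C. \<forall>x. cmod (f x) \<le> C * norm x)}"

text \<open>Adjoint of the operator T with domain D (T densely defined, so the value is unique).\<close>
definition adj_dom :: "'a::chilbert set \<Rightarrow> ('a \<Rightarrow> 'a) \<Rightarrow> 'a set" where
  "adj_dom D T = {v. \<exists>w. \<forall>u\<in>D. cinner (T u) v = cinner u w}"

definition adj :: "'a::chilbert set \<Rightarrow> ('a \<Rightarrow> 'a) \<Rightarrow> 'a \<Rightarrow> 'a" where
  "adj D T v = (THE w. \<forall>u\<in>D. cinner (T u) v = cinner u w)"

definition closed_op :: "'a::chilbert set \<Rightarrow> ('a \<Rightarrow> 'a) \<Rightarrow> bool" where
  "closed_op D T \<longleftrightarrow> closed {(u, T u) | u. u \<in> D}"

definition symmetric_op :: "'a::chilbert set \<Rightarrow> ('a \<Rightarrow> 'a) \<Rightarrow> bool" where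
  "symmetric_op D T \<longleftrightarrow> (\<forall>u\<in>D. \<forall>v\<in>D. cinner (T u) v = cinner u (T v))"

definition graph_norm :: "('a::real_normed_vector \<Rightarrow> 'a) \<Rightarrow> 'a \<Rightarrow> real" where
  "graph_norm S u = sqrt ((norm u)\<^sup>2 + (norm (S u))\<^sup>2)"

end

theory Submission
  imports Defs "HOL-Analysis.Analysis"
begin

lemma cinner_add_right: "cinner x (y + z) = cinner x y + cinner (x::'a::chilbert) z"
  by (metis cinner_commute cinner_add_left complex_cnj_add)

lemma cinner_cscale_right: "cinner x (c *\<^sub>C y) = cnj c * cinner (x::'a::chilbert) y"
  by (metis cinner_commute cinner_cscale_left complex_cnj_mult complex_cnj_cnj)

lemma cinner_zero_left [simp]: "cinner 0 (y::'a::chilbert) = 0"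
  by (metis add.right_neutral add_cancel_right_right cinner_add_left)

lemma cinner_zero_right [simp]: "cinner (x::'a::chilbert) 0 = 0"
  by (metis cinner_commute cinner_zero_left complex_cnj_zero)

lemma cinner_minus_left: "cinner (- x) (y::'a::chilbert) = - cinner x y"
  by (metis add.right_inverse add_eq_0_iff cinner_add_left cinner_zero_left)

lemma cinner_diff_left: "cinner (x - z) (y::'a::chilbert) = cinner x y - cinner z y"
  unfolding diff_conv_add_uminus by (simp only: cinner_add_left cinner_minus_left)

lemma cinner_minus_right: "cinner x (- (y::'a::chilbert)) = - cinner x y"
  by (metis cinner_commute cinner_minus_left complex_cnj_minus)

lemma cinner_diff_right: "cinner x (y - (z::'a::chilbert)) = cinner x y - cinner x z"
  unfolding diff_conv_add_uminus by (simp only: cinner_add_right cinner_minus_right)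

lemma cinner_scaleR_left: "cinner (r *\<^sub>R x) (y::'a::chilbert) = of_real r * cinner x y"
  by (simp add: scaleR_cscale cinner_cscale_left)

lemma cinner_scaleR_right: "cinner x (r *\<^sub>R (y::'a::chilbert)) = of_real r * cinner x y"
  by (simp add: scaleR_cscale cinner_cscale_right)

lemma Re_cinner_self: "Re (cinner x (x::'a::chilbert)) = (norm x)\<^sup>2"
  by (simp add: cinner_self_norm)

lemma Re_cinner_commute: "Re (cinner y x) = Re (cinner x (y::'a::chilbert))"
  by (subst cinner_commute) simp

lemma Re_ofr_mult: "Re (complex_of_real r * z) = r * Re z" by simp

lemma Re_cinner_le: "Re (cinner x (y::'a::chilbert)) \<le> norm x * norm y"
proof (cases "x = 0 \<or> y = 0")
  case True then show ?thesis by auto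
next
  case False
  define a where "a = norm x"
  define b where "b = norm y"
  have a0: "a > 0" and b0: "b > 0" using False by (auto simp: a_def b_def)
  define w where "w = b *\<^sub>R x - a *\<^sub>R y"
  have "cinner w w = of_real (b*b) * cinner x x - of_real (a*b) * cinner x y
        - of_real (a*b) * cinner y x + of_real (a*a) * cinner y y"
    unfolding w_def by (simp add: cinner_diff_left cinner_diff_right cinner_scaleR_left cinner_scaleR_right algebra_simps)
  then have "Re (cinner w w) = (b*b) * Re (cinner x x) - (a*b) * Re (cinner x y)
        - (a*b) * Re (cinner y x) + (a*a) * Re (cinner y y)"
    by (simp only: minus_complex.sel plus_complex.sel Re_ofr_mult)
  moreover have "Re (cinner x x) = a*a" "Re (cinner y y) = b*b" "Re (cinner y x) = Re (cinner x y)"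
    by (simp_all add: Re_cinner_self Re_cinner_commute[of x y] a_def b_def power2_eq_square)
  ultimately have "Re (cinner w w) = b*b*a*a - 2*a*b * Re (cinner x y) + a*a*b*b"
    by (simp add: algebra_simps)
  moreover have "Re (cinner w w) \<ge> 0" by (simp add: Re_cinner_self)
  ultimately have "2*a*b * Re (cinner x y) \<le> 2*a*b * (a*b)" by (simp add: algebra_simps)
  then have "Re (cinner x y) \<le> a * b" using a0 b0 by simp
  then show ?thesis by (simp add: a_def b_def)
qed

lemma norm_cscale: "norm (c *\<^sub>C (x::'a::chilbert)) = cmod c * norm x"
proof -
  have "(norm (c *\<^sub>C x))\<^sup>2 = Re (cinner (c *\<^sub>C x) (c *\<^sub>C x))" by (simp add: Re_cinner_self)
  also have "cinner (c *\<^sub>C x) (c *\<^sub>C x) = c * cnj c * cinner x x"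
    by (simp add: cinner_cscale_left cinner_cscale_right mult.assoc)
  then have "Re (cinner (c *\<^sub>C x) (c *\<^sub>C x)) = Re (c * cnj c * cinner x x)" by simp
  also have "\<dots> = (cmod c * norm x)\<^sup>2"
    by (simp add: complex_mult_cnj cinner_self_norm power_mult_distrib cmod_power2 flip: of_real_mult)
  finally show ?thesis by (simp add: power2_eq_iff_nonneg)
qed

lemma cinner_cauchy_schwarz: "cmod (cinner x (y::'a::chilbert)) \<le> norm x * norm y"
proof (cases "cinner x y = 0")
  case True then show ?thesis by simp
next
  case False
  define z where "z = cinner x y"
  define c where "c = z / of_real (cmod z)"
  have cc: "cmod c = 1" using False by (simp add: c_def z_def norm_divide)
  have "cinner x (c *\<^sub>C y) = cnj c * z" by (simp add: cinner_cscale_right z_def)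
  also have "\<dots> = cnj z * z / of_real (cmod z)" by (simp add: c_def)
  also have "\<dots> = of_real (cmod z)"
  proof -
    have "cnj z * z = of_real (cmod z) * of_real (cmod z)"
      using complex_norm_square[of z] by (simp add: power2_eq_square mult.commute)
    then show ?thesis using False by (simp add: z_def)
  qed
  finally have "Re (cinner x (c *\<^sub>C y)) = cmod z" by simp
  moreover have "Re (cinner x (c *\<^sub>C y)) \<le> norm x * norm y"
    using Re_cinner_le[of x "c *\<^sub>C y"] by (simp add: norm_cscale cc)
  ultimately show ?thesis by (simp add: z_def)
qed

lemma open_mapping_approx:
  fixes f :: "'a::banach \<Rightarrow> 'b::banach"
  assumes bl: "bounded_linear f" and su: "surj f"
  shows "\<exists>M\<ge>0. \<forall>y e. e > 0 \<longrightarrow> (\<exists>x. norm x \<le> M * norm y \<and> norm (y - f x) < e)"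
proof -
  interpret f: bounded_linear f by (rule bl)
  define G where "G = range (\<lambda>n::nat. closure (f ` ball 0 (real n)))"
  have "\<exists>n::nat. interior (closure (f ` ball 0 (real n))) \<noteq> {}"
  proof (rule ccontr)
    assume H: "\<not> ?thesis"
    have "euclidean interior_of \<Union>G = {}"
    proof (rule Baire_category_alt)
      show "completely_metrizable_space (euclidean::'b topology) \<or> locally_compact_space (euclidean::'b topology) \<and> regular_space (euclidean::'b topology)"
        using completely_metrizable_space_euclidean by blast
      show "countable G" unfolding G_def by simp
      fix T assume "T \<in> G"
      then show "closedin euclidean T \<and> euclidean interior_of T = {}"
        using H unfolding G_def by auto
    qed
    moreover have "\<Union>G = UNIV"
    proof -
      have "y \<in> \<Union>G" for y
      proof -
        obtain x where x: "y = f x" using su by (metis surjD)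
        obtain n::nat where "norm x < real n" using reals_Archimedean2 by blast
        then have "y \<in> closure (f ` ball 0 (real n))" using x closure_subset by fastforce
        then show ?thesis unfolding G_def by blast
      qed
      then show ?thesis by blast
    qed
    ultimately show False by simp
  qed
  then obtain n::nat where "interior (closure (f ` ball 0 (real n))) \<noteq> {}" by blast
  then obtain y0 where "y0 \<in> interior (closure (f ` ball 0 (real n)))" by blast
  then obtain r where r: "r > 0" "ball y0 r \<subseteq> closure (f ` ball 0 (real n))"
    by (meson open_contains_ball open_interior interior_subset subset_trans)
  have C: "\<exists>x. norm x < 2 * real n \<and> norm (f x - z) < e" if z: "norm z < r" and e: "e > 0" for z e
  proof -
    have "y0 + z \<in> ball y0 r" using z by (simp add: dist_norm)
    then have "y0 + z \<in> closure (f ` ball 0 (real n))" using r(2) by blast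
    then have "\<forall>e>0. \<exists>y\<in>f ` ball 0 (real n). dist y (y0 + z) < e"
      by (simp only: closure_approachable)
    moreover have "e/2 > 0" using e by simp
    ultimately obtain y1 where y1: "y1 \<in> f ` ball 0 (real n)" "dist y1 (y0 + z) < e/2" by blast
    then obtain x1 where x1: "x1 \<in> ball 0 (real n)" "dist (f x1) (y0 + z) < e/2" by blast
    have "y0 \<in> ball y0 r" using r(1) by simp
    then have "y0 \<in> closure (f ` ball 0 (real n))" using r(2) by blast
    then have "\<forall>e>0. \<exists>y\<in>f ` ball 0 (real n). dist y y0 < e"
      by (simp only: closure_approachable)
    moreover have "e/2 > 0" using e by simp
    ultimately obtain y2 where y2: "y2 \<in> f ` ball 0 (real n)" "dist y2 y0 < e/2" by blast
    then obtain x2 where x2: "x2 \<in> ball 0 (real n)" "dist (f x2) y0 < e/2" by blast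
    have "norm (x1 - x2) \<le> norm x1 + norm x2" by (rule norm_triangle_ineq4)
    also have "\<dots> < 2 * real n" using x1 x2 by simp
    finally have a: "norm (x1 - x2) < 2 * real n" .
    have "f (x1 - x2) - z = (f x1 - (y0 + z)) - (f x2 - y0)" by (simp add: f.diff)
    then have "norm (f (x1 - x2) - z) \<le> norm (f x1 - (y0 + z)) + norm (f x2 - y0)"
      by (metis norm_triangle_ineq4)
    also have "\<dots> < e" using x1 x2 by (simp add: dist_norm)
    finally show ?thesis using a by blast
  qed
  define M where "M = 4 * real n / r"
  have M0: "M \<ge> 0" using r by (simp add: M_def)
  have "\<exists>x. norm x \<le> M * norm y \<and> norm (y - f x) < e" if e: "e > 0" for y e
  proof (cases "y = 0")
    case True then show ?thesis using e by (intro exI[of _ 0]) simp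
  next
    case False
    define s where "s = 2 * norm y / r"
    have s0: "s > 0" using False r by (simp add: s_def)
    define z where "z = (1/s) *\<^sub>R y"
    have "norm z = r / 2" using False r s0 by (simp add: z_def s_def)
    then have "norm z < r" using r by simp
    then obtain x where x: "norm x < 2 * real n" "norm (f x - z) < e / s"
      using C[of z "e/s"] e s0 by auto
    have "norm (s *\<^sub>R x) = s * norm x" using s0 by simp
    also have "\<dots> \<le> s * (2 * real n)" using x s0 by simp
    also have "\<dots> = M * norm y" using r by (simp add: s_def M_def field_simps)
    finally have a: "norm (s *\<^sub>R x) \<le> M * norm y" .
    have "y - f (s *\<^sub>R x) = - (s *\<^sub>R (f x - z))"
      using s0 by (simp add: f.scaleR z_def algebra_simps)
    then have "norm (y - f (s *\<^sub>R x)) = s * norm (f x - z)" using s0 by simp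
    also have "\<dots> < s * (e / s)" using x s0 by (intro mult_strict_left_mono) auto
    also have "\<dots> = e" using s0 by simp
    finally show ?thesis using a by blast
  qed
  then show ?thesis using M0 by blast
qed

lemma open_mapping_bound:
  fixes f :: "'a::banach \<Rightarrow> 'b::banach"
  assumes bl: "bounded_linear f" and su: "surj f"
  shows "\<exists>M\<ge>0. \<forall>y. \<exists>x. f x = y \<and> norm x \<le> M * norm y"
proof -
  interpret f: bounded_linear f by (rule bl)
  obtain M where M0: "M \<ge> 0" and Mg: "\<And>y e. e > 0 \<Longrightarrow> \<exists>x. norm x \<le> M * norm y \<and> norm (y - f x) < e"
    using open_mapping_approx[OF bl su] by blast
  define g where "g y e = (SOME x. norm x \<le> M * norm y \<and> norm (y - f x) < e)" for y e
  have g: "norm (g y e) \<le> M * norm y \<and> norm (y - f (g y e)) < e" if "e > 0" for y e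
    unfolding g_def by (rule someI_ex) (rule Mg[OF that])
  have "\<exists>x. f x = y \<and> norm x \<le> (2*M) * norm y" for y
  proof (cases "y = 0")
    case True then show ?thesis by (intro exI[of _ 0]) simp
  next
    case False
    define d where "d = norm y"
    have d0: "d > 0" using False by (simp add: d_def)
    define ys where "ys = rec_nat y (\<lambda>k yk. yk - f (g yk (d * (1/2)^Suc k)))"
    have ys0: "ys 0 = y" by (simp add: ys_def)
    define xs where "xs k = g (ys k) (d * (1/2)^Suc k)" for k
    have ysS: "ys (Suc k) = ys k - f (xs k)" for k by (simp add: ys_def xs_def)
    have gk: "norm (xs k) \<le> M * norm (ys k) \<and> norm (ys k - f (xs k)) < d * (1/2)^Suc k" for k
      unfolding xs_def using d0 by (intro g) simp
    have ysb: "norm (ys k) \<le> d * (1/2)^k" for k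
    proof (cases k)
      case 0 then show ?thesis by (simp add: ys0 d_def)
    next
      case (Suc m) then show ?thesis using gk[of m] by (simp add: ysS)
    qed
    have xsb: "norm (xs k) \<le> M * d * (1/2)^k" for k
    proof -
      have "M * norm (ys k) \<le> M * (d * (1/2)^k)" by (rule mult_left_mono[OF ysb M0])
      then show ?thesis using gk[of k] by (simp add: mult.assoc)
    qed
    have sg: "summable (\<lambda>k. M * d * (1/2::real)^k)"
      by (intro summable_mult summable_geometric) simp
    have sx: "summable xs" by (rule summable_comparison_test'[OF sg xsb])
    have snx: "summable (\<lambda>k. norm (xs k))" by (rule summable_comparison_test'[OF sg]) (use xsb in simp)
    have ys_lim: "ys \<longlonglongrightarrow> 0"
    proof (rule Lim_null_comparison)
      show "\<forall>\<^sub>F k in sequentially. norm (ys k) \<le> d * (1/2)^k" using ysb by simp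
      show "(\<lambda>k. d * (1/2::real)^k) \<longlonglongrightarrow> 0"
        by (intro tendsto_mult_right_zero LIMSEQ_realpow_zero) auto
    qed
    have "(\<lambda>k. ys k - ys (Suc k)) sums (ys 0 - 0)"
      using telescope_sums'[OF ys_lim] .
    then have s1: "(\<lambda>k. f (xs k)) sums y" by (simp add: ysS ys0)
    have s2: "(\<lambda>k. f (xs k)) sums f (suminf xs)"
      using f.sums[OF summable_sums[OF sx]] .
    have fx: "f (suminf xs) = y" using sums_unique2[OF s2 s1] .
    have "norm (suminf xs) \<le> (\<Sum>k. norm (xs k))" by (rule summable_norm[OF snx])
    also have "\<dots> \<le> (\<Sum>k. M * d * (1/2::real)^k)" by (rule suminf_le[OF xsb snx sg])
    also have "\<dots> = M * d * 2" by (subst suminf_mult) (simp_all add: suminf_geometric)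
    finally show ?thesis using fx by (intro exI[of _ "suminf xs"]) (simp add: d_def mult_ac)
  qed
  then show ?thesis using M0 by (intro exI[of _ "2*M"]) auto
qed


lemma cscale_zero [simp]: "c *\<^sub>C (0::'a::cvec) = 0"
  by (metis add_cancel_right_right cscale_add_right add_0)

lemma bcm_add: "bounded_clinear_map f \<Longrightarrow> f (x + y) = f x + f y"
  by (simp add: bounded_clinear_map_def clinear_on_def)

lemma bcm_scale: "bounded_clinear_map f \<Longrightarrow> f (c *\<^sub>C x) = c *\<^sub>C f x"
  by (simp add: bounded_clinear_map_def clinear_on_def)

lemma bcm_zero: "bounded_clinear_map f \<Longrightarrow> f 0 = 0"
  by (metis add_cancel_right_right bcm_add add_0)

lemma bcm_diff: "bounded_clinear_map f \<Longrightarrow> f (x - y) = f x - f y"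
  by (metis bcm_add diff_add_cancel eq_diff_eq)

lemma bcm_scaleR: "bounded_clinear_map f \<Longrightarrow> f (r *\<^sub>R x) = r *\<^sub>R f x"
  by (simp add: scaleR_cscale bcm_scale)

lemma bcm_bound: "bounded_clinear_map f \<Longrightarrow> \<exists>C\<ge>0. \<forall>x. norm (f x) \<le> C * norm x"
proof -
  assume "bounded_clinear_map f"
  then obtain C where C: "\<forall>x. norm (f x) \<le> C * norm x" by (auto simp: bounded_clinear_map_def)
  have "norm (f x) \<le> max C 0 * norm x" for x
    using C[rule_format, of x] by (metis max.cobounded1 mult_right_mono norm_ge_zero order_trans)
  then show ?thesis by (intro exI[of _ "max C 0"]) auto
qed

theorem theorem4p3:
  fixes T :: "'h::chilbert \<Rightarrow> 'h" and DT :: "'h set"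
    and \<iota> :: "'g::chilbert \<Rightarrow> 'h"
    and j :: "'k::chilbert \<Rightarrow> 'd::chilbert"
    and \<gamma>0 \<gamma>1 :: "'g \<Rightarrow> 'k"
  assumes sepH0: "separable_space (euclidean :: 'h topology)"
    and sepKd: "separable_space (euclidean :: 'd topology)"
    and T_sub: "csubspace DT" and T_lin: "clinear_on DT T"
    and T_dense: "closure DT = UNIV"
    and T_closed: "closed_op DT T" and T_sym: "symmetric_op DT T"
    and H1_incl: "bounded_clinear_map \<iota>" "inj \<iota>"
    and H1_dense: "closure (range \<iota>) = UNIV"
    and K_incl: "bounded_clinear_map j" "inj j"
    and K_dense: "closure (range j) = UNIV"
    and H1_sub: "range \<iota> \<subseteq> adj_dom DT T"
    and H1_graph_dense: "\<forall>u\<in>adj_dom DT T. \<forall>e>0. \<exists>x. graph_norm (adj DT T) (\<iota> x - u) < e"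
    and Ts_bdd: "\<exists>C. \<forall>x. norm (adj DT T (\<iota> x)) \<le> C * norm x"
    and gam_bdd: "bounded_clinear_map \<gamma>0" "bounded_clinear_map \<gamma>1"
    and gam_surj: "\<forall>a b. \<exists>x. \<gamma>0 x = a \<and> \<gamma>1 x = b"
    and ker_dense: "closure (\<iota> ` {x. \<gamma>0 x = 0 \<and> \<gamma>1 x = 0}) = UNIV"
    and dom_T: "DT = \<iota> ` {x. \<gamma>0 x = 0 \<and> \<gamma>1 x = 0}"
    and lagrange: "\<forall>u v. cinner (adj DT T (\<iota> u)) (\<iota> v) - cinner (\<iota> u) (adj DT T (\<iota> v))
                       = cinner (j (\<gamma>1 u)) (j (\<gamma>0 v)) - cinner (j (\<gamma>0 u)) (j (\<gamma>1 v))"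
  shows "\<exists>\<Gamma>0 \<Gamma>1 :: 'h \<Rightarrow> 'k \<Rightarrow> complex.
     (\<forall>u\<in>adj_dom DT T. \<Gamma>0 u \<in> antidual \<and> \<Gamma>1 u \<in> antidual)
   \<and> (\<forall>u\<in>adj_dom DT T. \<forall>v\<in>adj_dom DT T. \<forall>k.
        \<Gamma>0 (u + v) k = \<Gamma>0 u k + \<Gamma>0 v k \<and> \<Gamma>1 (u + v) k = \<Gamma>1 u k + \<Gamma>1 v k)
   \<and> (\<forall>c. \<forall>u\<in>adj_dom DT T. \<forall>k. \<Gamma>0 (c *\<^sub>C u) k = c * \<Gamma>0 u k \<and> \<Gamma>1 (c *\<^sub>C u) k = c * \<Gamma>1 u k)
   \<and> (\<exists>C. \<forall>u\<in>adj_dom DT T. \<forall>k.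
        cmod (\<Gamma>0 u k) \<le> C * graph_norm (adj DT T) u * norm k
      \<and> cmod (\<Gamma>1 u k) \<le> C * graph_norm (adj DT T) u * norm k)
   \<and> (\<forall>x k. \<Gamma>0 (\<iota> x) k = cinner (j (\<gamma>0 x)) (j k) \<and> \<Gamma>1 (\<iota> x) k = cinner (j (\<gamma>1 x)) (j k))
   \<and> (\<forall>u\<in>adj_dom DT T. \<forall>v.
        cinner (adj DT T u) (\<iota> v) - cinner u (adj DT T (\<iota> v))
          = \<Gamma>1 u (\<gamma>0 v) - \<Gamma>0 u (\<gamma>1 v))"
  proof -
  define A where "A = adj DT T"
  define D where "D = adj_dom DT T"
  obtain Ci where Ci0: "Ci \<ge> 0" and Ci: "\<And>x. norm (\<iota> x) \<le> Ci * norm x"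
    using bcm_bound[OF H1_incl(1)] by blast
  obtain Ct0 where Ct0: "\<forall>x. norm (A (\<iota> x)) \<le> Ct0 * norm x" using Ts_bdd by (auto simp: A_def)
  define Ct where "Ct = max Ct0 0"
  have Ct0': "Ct \<ge> 0" by (simp add: Ct_def)
  have Ct: "norm (A (\<iota> x)) \<le> Ct * norm x" for x
  proof -
    have "Ct0 * norm x \<le> Ct * norm x" unfolding Ct_def by (intro mult_right_mono) auto
    then show ?thesis using Ct0[rule_format, of x] by linarith
  qed
  have uniq: "w1 = w2" if H: "\<forall>d\<in>DT. cinner d w1 = cinner d w2" for w1 w2
  proof (rule ccontr)
    assume ne: "w1 \<noteq> w2"
    define w where "w = w1 - w2"
    have wpos: "norm w > 0" using ne by (simp add: w_def)
    have "w \<in> closure DT" using T_dense by simp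
    then have "\<forall>e>0. \<exists>y\<in>DT. dist y w < e" by (simp add: closure_approachable)
    then obtain d where d: "d \<in> DT" "dist d w < norm w"
      using wpos by blast
    have dw: "cinner d w = 0" using H d by (simp add: cinner_diff_right w_def)
    have "(norm w)\<^sup>2 = cmod (cinner w w)"
      by (simp add: cinner_self_norm abs_of_nonneg flip: of_real_power)
    also have "cinner w w = cinner (w - d) w" by (simp add: cinner_diff_left dw)
    then have "cmod (cinner w w) = cmod (cinner (w - d) w)" by simp
    also have "cmod (cinner (w - d) w) \<le> norm (w - d) * norm w" by (rule cinner_cauchy_schwarz)
    also have "\<dots> < norm w * norm w"
      using d wpos by (simp add: dist_norm norm_minus_commute)
    finally show False by (simp add: power2_eq_square)
  qed
  have Aint: "v \<in> D \<and> A v = w" if H: "\<forall>d\<in>DT. cinner (T d) v = cinner d w" for v w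
  proof
    show "v \<in> D" using H unfolding D_def adj_dom_def by blast
    show "A v = w" unfolding A_def adj_def
    proof (rule the_equality)
      show "\<forall>d\<in>DT. cinner (T d) v = cinner d w" by (rule H)
      fix x assume "\<forall>d\<in>DT. cinner (T d) v = cinner d x"
      then have "\<forall>d\<in>DT. cinner d x = cinner d w" using H by simp
      then show "x = w" by (rule uniq)
    qed
  qed
  have Ach: "cinner (T d) v = cinner d (A v)" if vD: "v \<in> D" and dD: "d \<in> DT" for v d
  proof -
    obtain w where w: "\<forall>d\<in>DT. cinner (T d) v = cinner d w"
      using vD unfolding D_def adj_dom_def by blast
    then have "A v = w" using Aint by blast
    then show ?thesis using w dD by simp
  qed
  have Aadd: "u + v \<in> D \<and> A (u + v) = A u + A v" if "u \<in> D" "v \<in> D" for u v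
    by (rule Aint) (simp add: cinner_add_right Ach that)
  have Ascale: "c *\<^sub>C u \<in> D \<and> A (c *\<^sub>C u) = c *\<^sub>C A u" if "u \<in> D" for c u
    by (rule Aint) (simp add: cinner_cscale_right Ach that)
  have ADT: "d \<in> D \<and> A d = T d" if "d \<in> DT" for d
    by (rule Aint) (use T_sym that in \<open>simp add: symmetric_op_def\<close>)
  have Eker: "cinner (A u) d = cinner u (A d)" if "u \<in> D" "d \<in> DT" for u d
  proof -
    have "cinner (A u) d = cnj (cinner d (A u))" by (rule cinner_commute)
    also have "\<dots> = cnj (cinner (T d) u)" using Ach that by simp
    also have "\<dots> = cinner u (T d)" by (rule cinner_commute[of u "T d", symmetric])
    finally show ?thesis using ADT that(2) by simp
  qed
  have iD: "\<iota> x \<in> D" for x using H1_sub by (auto simp: D_def)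
  define E where "E u v = cinner (A u) (\<iota> v) - cinner u (A (\<iota> v))" for u v
  have E_addv: "E u (v1 + v2) = E u v1 + E u v2" for u v1 v2
    using Aadd[OF iD iD] by (simp add: E_def bcm_add[OF H1_incl(1)] cinner_add_right)
  have E_scalev: "E u (c *\<^sub>C v) = cnj c * E u v" for u c v
    using Ascale[OF iD] by (simp add: E_def bcm_scale[OF H1_incl(1)] cinner_cscale_right right_diff_distrib)
  have E_ker: "E u z = 0" if "u \<in> D" "\<gamma>0 z = 0" "\<gamma>1 z = 0" for u z
  proof -
    have "\<iota> z \<in> DT" using dom_T that by blast
    then show ?thesis using Eker that(1) by (simp add: E_def)
  qed
  have E_wd: "E u v = E u v'" if "u \<in> D" "\<gamma>0 v = \<gamma>0 v'" "\<gamma>1 v = \<gamma>1 v'" for u v v'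
  proof -
    have "E u v = E u (v' + (v - v'))" by simp
    also have "\<dots> = E u v' + E u (v - v')" by (rule E_addv)
    also have "E u (v - v') = 0"
      using that by (intro E_ker) (simp_all add: bcm_diff[OF gam_bdd(1)] bcm_diff[OF gam_bdd(2)])
    finally show ?thesis by simp
  qed
  have E_addu: "E (u1 + u2) v = E u1 v + E u2 v" if "u1 \<in> D" "u2 \<in> D" for u1 u2 v
    using Aadd[OF that] by (simp add: E_def cinner_add_left)
  have E_scaleu: "E (c *\<^sub>C u) v = c * E u v" if "u \<in> D" for c u v
    using Ascale[OF that] by (simp add: E_def cinner_cscale_left right_diff_distrib)
  have gn1: "norm u \<le> graph_norm A u" for u
    unfolding graph_norm_def by (rule real_le_rsqrt) simp
  have gn2: "norm (A u) \<le> graph_norm A u" for u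
    unfolding graph_norm_def by (rule real_le_rsqrt) simp
  have gn0: "graph_norm A u \<ge> 0" for u unfolding graph_norm_def by simp
  have E_bound: "cmod (E u v) \<le> graph_norm A u * (Ci + Ct) * norm v" for u v
  proof -
    have "cmod (E u v) \<le> cmod (cinner (A u) (\<iota> v)) + cmod (cinner u (A (\<iota> v)))"
      unfolding E_def by (rule norm_triangle_ineq4)
    also have "\<dots> \<le> norm (A u) * norm (\<iota> v) + norm u * norm (A (\<iota> v))"
      by (intro add_mono cinner_cauchy_schwarz)
    also have "\<dots> \<le> graph_norm A u * (Ci * norm v) + graph_norm A u * (Ct * norm v)"
      by (intro add_mono mult_mono gn1 gn2 Ci Ct gn0) auto
    also have "\<dots> = graph_norm A u * (Ci + Ct) * norm v" by (simp add: algebra_simps)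
    finally show ?thesis .
  qed
  obtain C0 where C0: "\<forall>x. norm (\<gamma>0 x) \<le> C0 * norm x"
    using gam_bdd(1) by (auto simp: bounded_clinear_map_def)
  obtain C1 where C1: "\<forall>x. norm (\<gamma>1 x) \<le> C1 * norm x"
    using gam_bdd(2) by (auto simp: bounded_clinear_map_def)
  define F where "F v = (\<gamma>0 v, \<gamma>1 v)" for v
  have blF: "bounded_linear F"
  proof (rule bounded_linear_intro[where K = "C0 + C1"])
    show "F (x + y) = F x + F y" for x y
      by (simp add: F_def bcm_add[OF gam_bdd(1)] bcm_add[OF gam_bdd(2)])
    show "F (r *\<^sub>R x) = r *\<^sub>R F x" for r x
      by (simp add: F_def bcm_scaleR[OF gam_bdd(1)] bcm_scaleR[OF gam_bdd(2)])
    show "norm (F x) \<le> norm x * (C0 + C1)" for x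
    proof -
      have "norm (F x) \<le> norm (\<gamma>0 x) + norm (\<gamma>1 x)" unfolding F_def by (rule norm_Pair_le)
      also have "\<dots> \<le> C0 * norm x + C1 * norm x" using C0 C1 by (intro add_mono) auto
      finally show ?thesis by (simp add: algebra_simps)
    qed
  qed
  have suF: "surj F"
  proof -
    have "p \<in> range F" for p
    proof -
      obtain x where "\<gamma>0 x = fst p \<and> \<gamma>1 x = snd p" using gam_surj by blast
      then have "p = F x" by (simp add: F_def prod_eq_iff)
      then show ?thesis by blast
    qed
    then show ?thesis by blast
  qed
  obtain M where M0: "M \<ge> 0" and Mx: "\<forall>y. \<exists>x. F x = y \<and> norm x \<le> M * norm y"
    using open_mapping_bound[OF blF suF] by blast
  from choice[OF Mx] obtain R where R: "\<forall>y. F (R y) = y \<and> norm (R y) \<le> M * norm y" by blast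
  define R0 where "R0 k = R (0, k)" for k
  define R1 where "R1 k = R (k, 0)" for k
  have R0: "\<gamma>0 (R0 k) = 0" "\<gamma>1 (R0 k) = k" "norm (R0 k) \<le> M * norm k" for k
    using R[rule_format, of "(0, k)"] by (simp_all add: R0_def F_def)
  have R1: "\<gamma>0 (R1 k) = k" "\<gamma>1 (R1 k) = 0" "norm (R1 k) \<le> M * norm k" for k
    using R[rule_format, of "(k, 0)"] by (simp_all add: R1_def F_def)
  define \<Gamma>0 where "\<Gamma>0 u k = - E u (R0 k)" for u k
  define \<Gamma>1 where "\<Gamma>1 u k = E u (R1 k)" for u k
  define Cb where "Cb = (Ci + Ct) * M"
  have Eb: "cmod (E u v) \<le> Cb * graph_norm A u * norm k" if "norm v \<le> M * norm k" for u v k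
  proof -
    have "cmod (E u v) \<le> graph_norm A u * (Ci + Ct) * norm v" by (rule E_bound)
    also have "\<dots> \<le> graph_norm A u * (Ci + Ct) * (M * norm k)"
      using that Ci0 Ct0' gn0[of u] by (intro mult_left_mono) auto
    finally show ?thesis by (simp add: Cb_def mult_ac)
  qed
  have B0: "cmod (\<Gamma>0 u k) \<le> Cb * graph_norm A u * norm k" for u k
    unfolding \<Gamma>0_def using Eb[OF R0(3)] by simp
  have B1: "cmod (\<Gamma>1 u k) \<le> Cb * graph_norm A u * norm k" for u k
    unfolding \<Gamma>1_def using Eb[OF R1(3)] by simp
  have AD0: "\<Gamma>0 u \<in> antidual" if u: "u \<in> D" for u
    unfolding antidual_def
  proof (intro CollectI conjI allI)
    fix x y
    have "E u (R0 (x + y)) = E u (R0 x + R0 y)"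
      using u by (intro E_wd) (simp_all add: R0 bcm_add[OF gam_bdd(1)] bcm_add[OF gam_bdd(2)])
    then show "\<Gamma>0 u (x + y) = \<Gamma>0 u x + \<Gamma>0 u y" by (simp add: \<Gamma>0_def E_addv)
  next
    fix c x
    have "E u (R0 (c *\<^sub>C x)) = E u (c *\<^sub>C R0 x)"
      using u by (intro E_wd) (simp_all add: R0 bcm_scale[OF gam_bdd(1)] bcm_scale[OF gam_bdd(2)])
    then show "\<Gamma>0 u (c *\<^sub>C x) = cnj c * \<Gamma>0 u x" by (simp add: \<Gamma>0_def E_scalev)
  next
    show "\<exists>C. \<forall>x. cmod (\<Gamma>0 u x) \<le> C * norm x"
      using B0 by (intro exI[of _ "Cb * graph_norm A u"]) auto
  qed
  have AD1: "\<Gamma>1 u \<in> antidual" if u: "u \<in> D" for u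
    unfolding antidual_def
  proof (intro CollectI conjI allI)
    fix x y
    have "E u (R1 (x + y)) = E u (R1 x + R1 y)"
      using u by (intro E_wd) (simp_all add: R1 bcm_add[OF gam_bdd(1)] bcm_add[OF gam_bdd(2)])
    then show "\<Gamma>1 u (x + y) = \<Gamma>1 u x + \<Gamma>1 u y" by (simp add: \<Gamma>1_def E_addv)
  next
    fix c x
    have "E u (R1 (c *\<^sub>C x)) = E u (c *\<^sub>C R1 x)"
      using u by (intro E_wd) (simp_all add: R1 bcm_scale[OF gam_bdd(1)] bcm_scale[OF gam_bdd(2)])
    then show "\<Gamma>1 u (c *\<^sub>C x) = cnj c * \<Gamma>1 u x" by (simp add: \<Gamma>1_def E_scalev)
  next
    show "\<exists>C. \<forall>x. cmod (\<Gamma>1 u x) \<le> C * norm x"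
      using B1 by (intro exI[of _ "Cb * graph_norm A u"]) auto
  qed
  have lag: "E (\<iota> u) v = cinner (j (\<gamma>1 u)) (j (\<gamma>0 v)) - cinner (j (\<gamma>0 u)) (j (\<gamma>1 v))" for u v
    using lagrange unfolding E_def A_def by blast
  have j0: "j 0 = 0" by (rule bcm_zero[OF K_incl(1)])
  have P5: "\<Gamma>0 (\<iota> x) k = cinner (j (\<gamma>0 x)) (j k) \<and> \<Gamma>1 (\<iota> x) k = cinner (j (\<gamma>1 x)) (j k)" for x k
    by (simp add: \<Gamma>0_def \<Gamma>1_def lag R0 R1 j0)
  have P6: "E u v = \<Gamma>1 u (\<gamma>0 v) - \<Gamma>0 u (\<gamma>1 v)" if u: "u \<in> D" for u v
  proof -
    have "E u v = E u (R1 (\<gamma>0 v) + R0 (\<gamma>1 v))"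
      using u by (intro E_wd) (simp_all add: R0 R1 bcm_add[OF gam_bdd(1)] bcm_add[OF gam_bdd(2)])
    then show ?thesis by (simp add: \<Gamma>0_def \<Gamma>1_def E_addv)
  qed
  have f1: "\<forall>u\<in>D. \<Gamma>0 u \<in> antidual \<and> \<Gamma>1 u \<in> antidual" using AD0 AD1 by blast
  have f2: "\<forall>u\<in>D. \<forall>v\<in>D. \<forall>k. \<Gamma>0 (u + v) k = \<Gamma>0 u k + \<Gamma>0 v k \<and> \<Gamma>1 (u + v) k = \<Gamma>1 u k + \<Gamma>1 v k"
    by (simp add: \<Gamma>0_def \<Gamma>1_def E_addu)
  have f3: "\<forall>c. \<forall>u\<in>D. \<forall>k. \<Gamma>0 (c *\<^sub>C u) k = c * \<Gamma>0 u k \<and> \<Gamma>1 (c *\<^sub>C u) k = c * \<Gamma>1 u k"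
    by (simp add: \<Gamma>0_def \<Gamma>1_def E_scaleu)
  have f4: "\<exists>C. \<forall>u\<in>D. \<forall>k. cmod (\<Gamma>0 u k) \<le> C * graph_norm A u * norm k
                      \<and> cmod (\<Gamma>1 u k) \<le> C * graph_norm A u * norm k"
    using B0 B1 by (intro exI[of _ Cb]) auto
  have f5: "\<forall>x k. \<Gamma>0 (\<iota> x) k = cinner (j (\<gamma>0 x)) (j k) \<and> \<Gamma>1 (\<iota> x) k = cinner (j (\<gamma>1 x)) (j k)"
    using P5 by blast
  have f6: "\<forall>u\<in>D. \<forall>v. cinner (A u) (\<iota> v) - cinner u (A (\<iota> v)) = \<Gamma>1 u (\<gamma>0 v) - \<Gamma>0 u (\<gamma>1 v)"
    using P6 unfolding E_def by blast
  have all: "(\<forall>u\<in>D. \<Gamma>0 u \<in> antidual \<and> \<Gamma>1 u \<in> antidual)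
   \<and> (\<forall>u\<in>D. \<forall>v\<in>D. \<forall>k. \<Gamma>0 (u + v) k = \<Gamma>0 u k + \<Gamma>0 v k \<and> \<Gamma>1 (u + v) k = \<Gamma>1 u k + \<Gamma>1 v k)
   \<and> (\<forall>c. \<forall>u\<in>D. \<forall>k. \<Gamma>0 (c *\<^sub>C u) k = c * \<Gamma>0 u k \<and> \<Gamma>1 (c *\<^sub>C u) k = c * \<Gamma>1 u k)
   \<and> (\<exists>C. \<forall>u\<in>D. \<forall>k. cmod (\<Gamma>0 u k) \<le> C * graph_norm A u * norm k
                      \<and> cmod (\<Gamma>1 u k) \<le> C * graph_norm A u * norm k)
   \<and> (\<forall>x k. \<Gamma>0 (\<iota> x) k = cinner (j (\<gamma>0 x)) (j k) \<and> \<Gamma>1 (\<iota> x) k = cinner (j (\<gamma>1 x)) (j k))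
   \<and> (\<forall>u\<in>D. \<forall>v. cinner (A u) (\<iota> v) - cinner u (A (\<iota> v)) = \<Gamma>1 u (\<gamma>0 v) - \<Gamma>0 u (\<gamma>1 v))"
    by (intro conjI f1 f2 f3 f4 f5 f6)
  show ?thesis
    apply (rule exI[of _ \<Gamma>0])
    apply (rule exI[of _ \<Gamma>1])
    using all unfolding A_def D_def by assumption
qed

end
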